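(* Let $M$ be a matroid of rank $r$ on a finite linearly ordered set $E$. Then $\mathcal U^*(M)$ is an antichain (no member is properly contained in another).
   Context: The graded lexicographic order on $2^E$: $X\prec Y$ if $|X|<|Y|$, or $|X|=|Y|$ and $\min(X\triangle Y)\in X$; for nonempty $\mathcal X\subseteq 2^E$, $\min\mathcal X$ is its $\prec$-smallest member. A set $X$ is $k$-closed in $M$ if $\mathrm{cl}_M(Y)\subseteq X$ for all $Y\subseteq X$ with $|Y|\le k$; $\mathrm{cl}_k(X)$ is the intersection of all $k$-closed sets containing $X$ (for $k<0$ every set is $k$-closed, so $\mathrm{cl}_{-1}(X)=X$). For a flat $F$ of $M$ of rank $k$, $U^*_F=\min\{U : \mathrm{cl}_{k-1}(U)=F\}$. For $0\le k\le r-1$, $\mathcal U^*_k=\{U^*_F : F \text{ a flat of rank } k,\ |U^*_F|>k\}$, and $\mathcal U^*(M)=\bigcup_{k=0}^{r-1}\mathcal U^*_k$. *)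

theory Defs
  imports Main
begin

definition matroid :: "'a set \<Rightarrow> ('a set \<Rightarrow> bool) \<Rightarrow> bool" where
  "matroid E indep \<longleftrightarrow> finite E \<and> indep {} \<and> (\<forall>I. indep I \<longrightarrow> I \<subseteq> E)
     \<and> (\<forall>I J. indep J \<and> I \<subseteq> J \<longrightarrow> indep I)
     \<and> (\<forall>I J. indep I \<and> indep J \<and> card I < card J \<longrightarrow> (\<exists>e\<in>J - I. indep (insert e I)))"

definition mrank :: "('a set \<Rightarrow> bool) \<Rightarrow> 'a set \<Rightarrow> nat" where
  "mrank indep X = Max (card ` {I. I \<subseteq> X \<and> indep I})"

definition mcl :: "'a set \<Rightarrow> ('a set \<Rightarrow> bool) \<Rightarrow> 'a set \<Rightarrow> 'a set" where
  "mcl E indep X = {e \<in> E. mrank indep (insert e X) = mrank indep X}"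

definition flat :: "'a set \<Rightarrow> ('a set \<Rightarrow> bool) \<Rightarrow> 'a set \<Rightarrow> bool" where
  "flat E indep F \<longleftrightarrow> F \<subseteq> E \<and> mcl E indep F = F"

text \<open>X is k-closed: the closure of every subset of X of size at most k lies in X
  (for k < 0 every set is k-closed).\<close>
definition k_closed :: "'a set \<Rightarrow> ('a set \<Rightarrow> bool) \<Rightarrow> int \<Rightarrow> 'a set \<Rightarrow> bool" where
  "k_closed E indep k X \<longleftrightarrow> (\<forall>Y. Y \<subseteq> X \<and> int (card Y) \<le> k \<longrightarrow> mcl E indep Y \<subseteq> X)"

definition cl_k :: "'a set \<Rightarrow> ('a set \<Rightarrow> bool) \<Rightarrow> int \<Rightarrow> 'a set \<Rightarrow> 'a set" where
  "cl_k E indep k X = \<Inter> {Z. Z \<subseteq> E \<and> X \<subseteq> Z \<and> k_closed E indep k Z}"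

definition glex_less :: "'a::linorder set \<Rightarrow> 'a set \<Rightarrow> bool" where
  "glex_less X Y \<longleftrightarrow> card X < card Y \<or>
     (card X = card Y \<and> X \<noteq> Y \<and> Min ((X - Y) \<union> (Y - X)) \<in> X)"

definition glex_min :: "'a::linorder set set \<Rightarrow> 'a set" where
  "glex_min \<X> = (THE U. U \<in> \<X> \<and> (\<forall>V\<in>\<X>. V \<noteq> U \<longrightarrow> glex_less U V))"

definition Ustar :: "'a::linorder set \<Rightarrow> ('a set \<Rightarrow> bool) \<Rightarrow> 'a set \<Rightarrow> 'a set" where
  "Ustar E indep F =
     glex_min {U. U \<subseteq> E \<and> cl_k E indep (int (mrank indep F) - 1) U = F}"

definition Ustar_k :: "'a::linorder set \<Rightarrow> ('a set \<Rightarrow> bool) \<Rightarrow> nat \<Rightarrow> 'a set set" where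
  "Ustar_k E indep k = {Ustar E indep F | F. flat E indep F \<and> mrank indep F = k
                          \<and> card (Ustar E indep F) > k}"

definition Ustar_all :: "'a::linorder set \<Rightarrow> ('a set \<Rightarrow> bool) \<Rightarrow> 'a set set" where
  "Ustar_all E indep = (\<Union>k\<in>{0..<mrank indep E}. Ustar_k E indep k)"

end

theory Submission
  imports Defs
begin

section \<open>Graded lex order\<close>

lemma glex_char:
  fixes X Y :: "'a::linorder set"
  assumes "finite X" "finite Y" "X \<noteq> Y"
  shows "Min ((X - Y) \<union> (Y - X)) \<in> X \<longleftrightarrow> (\<exists>a\<in>X - Y. \<forall>x<a. x \<in> X \<longleftrightarrow> x \<in> Y)"
proof -
  let ?D = "(X - Y) \<union> (Y - X)"
  have fD: "finite ?D" using assms by auto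
  have neD: "?D \<noteq> {}" using assms by auto
  show ?thesis
  proof
    assume m: "Min ?D \<in> X"
    have "Min ?D \<in> ?D" using Min_in[OF fD neD] .
    hence "Min ?D \<notin> Y" using m by auto
    moreover have "\<forall>x<Min ?D. x \<in> X \<longleftrightarrow> x \<in> Y"
    proof (intro allI impI)
      fix x assume "x < Min ?D"
      hence "x \<notin> ?D" using Min_le[OF fD] by (meson leD)
      thus "x \<in> X \<longleftrightarrow> x \<in> Y" by auto
    qed
    ultimately show "\<exists>a\<in>X - Y. \<forall>x<a. x \<in> X \<longleftrightarrow> x \<in> Y" using m by auto
  next
    assume "\<exists>a\<in>X - Y. \<forall>x<a. x \<in> X \<longleftrightarrow> x \<in> Y"
    then obtain a where a: "a \<in> X" "a \<notin> Y" "\<forall>x<a. x \<in> X \<longleftrightarrow> x \<in> Y" by auto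
    have "a \<in> ?D" using a by auto
    hence le: "Min ?D \<le> a" using Min_le[OF fD] by auto
    have mD: "Min ?D \<in> ?D" using Min_in[OF fD neD] .
    have "\<not> Min ?D < a" using a(3) mD by blast
    hence "Min ?D = a" using le by auto
    thus "Min ?D \<in> X" using a by auto
  qed
qed

lemma glex_card: "glex_less X Y \<Longrightarrow> card X \<le> card Y"
  unfolding glex_less_def by auto

lemma glex_asym:
  fixes X Y :: "'a::linorder set"
  assumes "finite X" "finite Y" "glex_less X Y"
  shows "\<not> glex_less Y X"
proof
  assume h: "glex_less Y X"
  have c: "card X = card Y" using glex_card[OF h] glex_card[OF assms(3)] by auto
  let ?D = "(X - Y) \<union> (Y - X)"
  have e: "(Y - X) \<union> (X - Y) = ?D" by auto
  have ne: "X \<noteq> Y" and m1: "Min ?D \<in> X" using assms(3) c unfolding glex_less_def by auto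
  have m2: "Min ?D \<in> Y" using h c e unfolding glex_less_def by auto
  have "Min ?D \<in> ?D" using assms ne by (intro Min_in) auto
  thus False using m1 m2 by auto
qed

lemma glex_total:
  fixes X Y :: "'a::linorder set"
  assumes "finite X" "finite Y" "X \<noteq> Y"
  shows "glex_less X Y \<or> glex_less Y X"
proof -
  let ?D = "(X - Y) \<union> (Y - X)"
  have e: "(Y - X) \<union> (X - Y) = ?D" by auto
  have "Min ?D \<in> ?D" using assms by (intro Min_in) auto
  hence "Min ?D \<in> X \<or> Min ((Y - X) \<union> (X - Y)) \<in> Y" using e by auto
  moreover have "card X < card Y \<or> card Y < card X \<or> card X = card Y" by linarith
  ultimately show ?thesis using assms(3) unfolding glex_less_def by metis
qed

lemma glex_trans:
  fixes X Y Z :: "'a::linorder set"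
  assumes f: "finite X" "finite Y" "finite Z" and h1: "glex_less X Y" and h2: "glex_less Y Z"
  shows "glex_less X Z"
proof (cases "card X < card Z")
  case True thus ?thesis unfolding glex_less_def by auto
next
  case False
  have c: "card X = card Y" "card Y = card Z" using glex_card[OF h1] glex_card[OF h2] False by auto
  have nXY: "X \<noteq> Y" and nYZ: "Y \<noteq> Z" using h1 h2 c unfolding glex_less_def by auto
  have "Min ((X - Y) \<union> (Y - X)) \<in> X" using h1 c unfolding glex_less_def by auto
  then obtain a where a: "a \<in> X" "a \<notin> Y" "\<forall>x<a. x \<in> X \<longleftrightarrow> x \<in> Y"
    using glex_char[OF f(1,2) nXY] by auto
  have "Min ((Y - Z) \<union> (Z - Y)) \<in> Y" using h2 c unfolding glex_less_def by auto
  then obtain b where b: "b \<in> Y" "b \<notin> Z" "\<forall>x<b. x \<in> Y \<longleftrightarrow> x \<in> Z"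
    using glex_char[OF f(2,3) nYZ] by auto
  have ex: "\<exists>d\<in>X - Z. \<forall>x<d. x \<in> X \<longleftrightarrow> x \<in> Z"
  proof (cases "a < b")
    case True
    hence "a \<notin> Z" using a b by auto
    thus ?thesis using a b True by (intro bexI[of _ a]) auto
  next
    case False
    have "a \<noteq> b" using a b by auto
    hence ba: "b < a" using False by auto
    hence "b \<in> X" using a b by auto
    thus ?thesis using a b ba by (intro bexI[of _ b]) auto
  qed
  have nXZ: "X \<noteq> Z" using ex by auto
  show ?thesis using glex_char[OF f(1,3) nXZ] ex c nXZ unfolding glex_less_def by auto
qed

lemma glex_has_min:
  fixes fam :: "'a::linorder set set"
  assumes "finite fam" "fam \<noteq> {}" "\<forall>X\<in>fam. finite X"
  shows "\<exists>U\<in>fam. \<forall>V\<in>fam. V \<noteq> U \<longrightarrow> glex_less U V"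
  using assms
proof (induction fam rule: finite_ne_induct)
  case (singleton x) thus ?case by auto
next
  case (insert x F)
  then obtain m where m: "m \<in> F" "\<forall>V\<in>F. V \<noteq> m \<longrightarrow> glex_less m V" by auto
  have fx: "finite x" and fm: "finite m" using insert m by auto
  show ?case
  proof (cases "glex_less x m")
    case True
    show ?thesis
    proof (intro bexI[of _ x] ballI impI)
      fix V assume "V \<in> insert x F" "V \<noteq> x"
      hence "V \<in> F" by auto
      show "glex_less x V"
      proof (cases "V = m")
        case True thus ?thesis using \<open>glex_less x m\<close> by simp
      next
        case False
        thus ?thesis using glex_trans[OF fx fm, of V] \<open>glex_less x m\<close> m \<open>V \<in> F\<close> insert by auto
      qed
    qed auto
  next
    case False
    have "x \<noteq> m" using insert m by auto
    hence "glex_less m x" using glex_total[OF fx fm] False by auto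
    thus ?thesis using m by (intro bexI[of _ m]) auto
  qed
qed

lemma glex_min_prop:
  fixes fam :: "'a::linorder set set"
  assumes "finite fam" "fam \<noteq> {}" "\<forall>X\<in>fam. finite X"
  shows "glex_min fam \<in> fam \<and> (\<forall>V\<in>fam. V \<noteq> glex_min fam \<longrightarrow> glex_less (glex_min fam) V)"
proof -
  obtain U where U: "U \<in> fam" "\<forall>V\<in>fam. V \<noteq> U \<longrightarrow> glex_less U V"
    using glex_has_min[OF assms] by auto
  have uniq: "W = U" if "W \<in> fam" "\<forall>V\<in>fam. V \<noteq> W \<longrightarrow> glex_less W V" for W
  proof (rule ccontr)
    assume "W \<noteq> U"
    hence "glex_less W U" "glex_less U W" using that U by auto
    thus False using glex_asym assms(3) U(1) that(1) by blast
  qed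
  have "(\<lambda>W. W \<in> fam \<and> (\<forall>V\<in>fam. V \<noteq> W \<longrightarrow> glex_less W V)) (THE W. W \<in> fam \<and> (\<forall>V\<in>fam. V \<noteq> W \<longrightarrow> glex_less W V))"
  proof (rule theI[of _ U])
    show "U \<in> fam \<and> (\<forall>V\<in>fam. V \<noteq> U \<longrightarrow> glex_less U V)" using U by blast
  next
    fix W assume "W \<in> fam \<and> (\<forall>V\<in>fam. V \<noteq> W \<longrightarrow> glex_less W V)"
    thus "W = U" using uniq by blast
  qed
  thus ?thesis unfolding glex_min_def by simp
qed


section \<open>Matroid basics\<close>

context
  fixes E :: "'a set" and indep :: "'a set \<Rightarrow> bool"
  assumes M: "matroid E indep"
begin

lemma m_fin: "finite E" using M unfolding matroid_def by blast
lemma m_empty: "indep {}" using M unfolding matroid_def by blast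
lemma m_sub: "indep I \<Longrightarrow> I \<subseteq> E" using M unfolding matroid_def by blast
lemma m_down: "indep J \<Longrightarrow> I \<subseteq> J \<Longrightarrow> indep I" using M unfolding matroid_def by blast
lemma m_aug: "indep I \<Longrightarrow> indep J \<Longrightarrow> card I < card J \<Longrightarrow> \<exists>e\<in>J - I. indep (insert e I)"
  using M unfolding matroid_def by blast

lemma rk_fin: "X \<subseteq> E \<Longrightarrow> finite (card ` {I. I \<subseteq> X \<and> indep I})"
proof -
  assume "X \<subseteq> E"
  hence "finite X" using finite_subset[OF _ m_fin] by blast
  hence "finite {I. I \<subseteq> X \<and> indep I}" by (rule rev_finite_subset[OF finite_Pow_iff[THEN iffD2]]) auto
  thus ?thesis by simp
qed

lemma rk_ne: "card ` {I. I \<subseteq> X \<and> indep I} \<noteq> {}"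
  using m_empty by blast

lemma R3: "X \<subseteq> E \<Longrightarrow> indep I \<Longrightarrow> I \<subseteq> X \<Longrightarrow> card I \<le> mrank indep X"
  unfolding mrank_def by (rule Max_ge[OF rk_fin]) auto

lemma R2: "X \<subseteq> E \<Longrightarrow> \<exists>I. I \<subseteq> X \<and> indep I \<and> card I = mrank indep X"
proof -
  assume XE: "X \<subseteq> E"
  have fin: "finite (card ` {I. I \<subseteq> X \<and> indep I})" using rk_fin[OF XE] .
  have ne: "card ` {I. I \<subseteq> X \<and> indep I} \<noteq> {}" using rk_ne .
  have "Max (card ` {I. I \<subseteq> X \<and> indep I}) \<in> card ` {I. I \<subseteq> X \<and> indep I}"
    using Max_in[OF fin ne] .
  hence "mrank indep X \<in> card ` {I. I \<subseteq> X \<and> indep I}" unfolding mrank_def .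
  then obtain I where I: "I \<in> {I. I \<subseteq> X \<and> indep I}" "mrank indep X = card I" by (rule imageE)
  show ?thesis by (rule exI[of _ I]) (use I in simp)
qed

lemma R2':
  assumes "X \<subseteq> E"
  obtains I where "I \<subseteq> X" "indep I" "card I = mrank indep X"
  using R2[OF assms] by (elim exE conjE)

lemma R1: "X \<subseteq> Y \<Longrightarrow> Y \<subseteq> E \<Longrightarrow> mrank indep X \<le> mrank indep Y"
proof -
  assume a: "X \<subseteq> Y" "Y \<subseteq> E"
  obtain I where I: "I \<subseteq> X" "indep I" "card I = mrank indep X" by (rule R2'[OF order_trans[OF a]])
  have "I \<subseteq> Y" using I(1) a(1) by (rule order_trans)
  hence "card I \<le> mrank indep Y" using R3[OF a(2) I(2)] by blast
  thus ?thesis using I(3) by simp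
qed

lemma R4: "indep I \<Longrightarrow> mrank indep I = card I"
proof -
  assume i: "indep I"
  have IE: "I \<subseteq> E" using m_sub i .
  have fI: "finite I" using finite_subset[OF IE m_fin] .
  obtain J where "J \<subseteq> I" "indep J" "card J = mrank indep I" by (rule R2'[OF IE])
  hence "mrank indep I \<le> card I" using card_mono fI by metis
  moreover have "card I \<le> mrank indep I" using R3[OF IE i] by simp
  ultimately show ?thesis by simp
qed

lemma EXT: "indep I \<Longrightarrow> I \<subseteq> X \<Longrightarrow> X \<subseteq> E \<Longrightarrow>
   \<exists>K. I \<subseteq> K \<and> K \<subseteq> X \<and> indep K \<and> card K = mrank indep X"
proof -
  assume i: "indep I" "I \<subseteq> X" "X \<subseteq> E"
  let ?S = "{K. I \<subseteq> K \<and> K \<subseteq> X \<and> indep K}"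
  have fX: "finite X" using finite_subset[OF i(3) m_fin] .
  have "finite ?S" by (rule rev_finite_subset[OF finite_Pow_iff[THEN iffD2, OF fX]]) auto
  hence f: "finite (card ` ?S)" by simp
  have ne: "card ` ?S \<noteq> {}" using i by blast
  have "Max (card ` ?S) \<in> card ` ?S" by (rule Max_in[OF f ne])
  then obtain K where K: "K \<in> ?S" "card K = Max (card ` ?S)" by auto
  have mx: "\<And>K'. K' \<in> ?S \<Longrightarrow> card K' \<le> card K" using K(2) Max_ge[OF f] by auto
  obtain B0 where B0: "B0 \<subseteq> X" "indep B0" "card B0 = mrank indep X" by (rule R2'[OF i(3)])
  have "\<not> card K < mrank indep X"
  proof
    assume "card K < mrank indep X"
    then obtain z where z: "z \<in> B0 - K" "indep (insert z K)" using m_aug[of K B0] K B0 by auto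
    have "insert z K \<in> ?S" using z K B0 by auto
    moreover have "finite K" using K fX finite_subset by blast
    ultimately show False using mx[of "insert z K"] z by auto
  qed
  moreover have "card K \<le> mrank indep X" using R3[OF i(3) _ ] K(1) by simp
  ultimately show ?thesis using K by auto
qed

lemma flat_closed:
  assumes fl: "flat E indep X" and Y: "Y \<subseteq> X"
  shows "mcl E indep Y \<subseteq> X"
proof
  fix e assume e: "e \<in> mcl E indep Y"
  have XE: "X \<subseteq> E" using fl unfolding flat_def by blast
  have YE: "Y \<subseteq> E" using Y XE by (rule order_trans)
  have eE: "e \<in> E" using e unfolding mcl_def by blast
  have re: "mrank indep (insert e Y) = mrank indep Y" using e unfolding mcl_def by blast
  show "e \<in> X"
  proof (rule ccontr)
    assume eX: "e \<notin> X"
    obtain I where I: "I \<subseteq> Y" "indep I" "card I = mrank indep Y" by (rule R2'[OF YE])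
    have IX: "I \<subseteq> X" using I(1) Y by (rule order_trans)
    obtain K where K: "I \<subseteq> K" "K \<subseteq> X" "indep K" "card K = mrank indep X"
      using EXT[OF I(2) IX XE] by (elim exE conjE) (rule that)
    have "mcl E indep X = X" using fl unfolding flat_def by blast
    hence "e \<notin> mcl E indep X" using eX by simp
    hence ne: "mrank indep (insert e X) \<noteq> mrank indep X" using eE unfolding mcl_def by simp
    have eXE: "insert e X \<subseteq> E" using eE XE by blast
    have "mrank indep X \<le> mrank indep (insert e X)" using R1[OF _ eXE, of X] by blast
    hence gt: "mrank indep X < mrank indep (insert e X)" using ne by linarith
    obtain L where L: "L \<subseteq> insert e X" "indep L" "card L = mrank indep (insert e X)"
      by (rule R2'[OF eXE])
    have cKL: "card K < card L" using gt K(4) L(3) by simp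
    obtain z where z: "z \<in> L - K" "indep (insert z K)" using m_aug[OF K(3) L(2) cKL] by blast
    have fK: "finite K" using finite_subset[OF order_trans[OF K(2) XE] m_fin] .
    have zK: "z \<notin> K" using z(1) by blast
    have "z = e"
    proof (rule ccontr)
      assume "z \<noteq> e"
      hence "z \<in> X" using z(1) L(1) by blast
      hence "insert z K \<subseteq> X" using K(2) by blast
      hence "card (insert z K) \<le> mrank indep X" using R3[OF XE z(2)] by simp
      moreover have "card (insert z K) = card K + 1" using fK zK by simp
      ultimately show False using K(4) by linarith
    qed
    hence ieK: "indep (insert e K)" using z(2) by simp
    have sub: "insert e I \<subseteq> insert e K" using K(1) by blast
    have ieI: "indep (insert e I)" using m_down[OF ieK sub] .
    have sub2: "insert e I \<subseteq> insert e Y" using I(1) by blast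
    have eYE: "insert e Y \<subseteq> E" using eE YE by blast
    have c1: "card (insert e I) \<le> mrank indep (insert e Y)" using R3[OF eYE ieI sub2] .
    have eI: "e \<notin> I" using IX eX by blast
    have fI: "finite I" using finite_subset[OF K(1) fK] .
    have "card (insert e I) = card I + 1" using eI fI by simp
    thus False using c1 re I(3) by linarith
  qed
qed

lemma flat_eq:
  assumes fF: "flat E indep F" and fG: "flat E indep G" and FG: "F \<subseteq> G" and rr: "mrank indep F = mrank indep G"
  shows "F = G"
proof (rule ccontr)
  assume "F \<noteq> G"
  then obtain g where g: "g \<in> G" "g \<notin> F" using FG by blast
  have GE: "G \<subseteq> E" using fG unfolding flat_def by blast
  have gE: "g \<in> E" using g(1) GE by blast
  have "mcl E indep F = F" using fF unfolding flat_def by blast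
  hence "g \<notin> mcl E indep F" using g(2) by simp
  hence ne: "mrank indep (insert g F) \<noteq> mrank indep F" using gE unfolding mcl_def by simp
  have s1: "insert g F \<subseteq> G" using g(1) FG by blast
  have s2: "F \<subseteq> insert g F" by blast
  have a1: "mrank indep F \<le> mrank indep (insert g F)" using R1[OF s2 order_trans[OF s1 GE]] .
  have a2: "mrank indep (insert g F) \<le> mrank indep G" using R1[OF s1 GE] .
  show False using ne a1 a2 rr by linarith
qed

lemma basis_cl:
  assumes "U \<subseteq> E" "I \<subseteq> U" "indep I" "card I = mrank indep U" "x \<in> U"
  shows "x \<in> mcl E indep I"
proof -
  have "mrank indep (insert x I) \<le> mrank indep U" using R1[of "insert x I" U] assms by auto
  moreover have "mrank indep I \<le> mrank indep (insert x I)" using R1[of I "insert x I"] assms by auto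
  ultimately show ?thesis using R4[OF assms(3)] assms unfolding mcl_def by auto
qed

end

section \<open>closure cl_k\<close>

lemma E_closed: "k_closed E indep j E"
  unfolding k_closed_def mcl_def by auto

lemma cl_sup: "U \<subseteq> E \<Longrightarrow> U \<subseteq> cl_k E indep j U"
  unfolding cl_k_def by (rule Inter_greatest) blast

lemma cl_sub_E: "cl_k E indep j U \<subseteq> E" if "U \<subseteq> E"
  unfolding cl_k_def by (rule Inter_lower) (use that E_closed in blast)

lemma cl_least: "Z \<subseteq> E \<Longrightarrow> U \<subseteq> Z \<Longrightarrow> k_closed E indep j Z \<Longrightarrow> cl_k E indep j U \<subseteq> Z"
  unfolding cl_k_def by (rule Inter_lower) blast

lemma k_closed_Inter: "(\<forall>Z\<in>C. k_closed E indep j Z) \<Longrightarrow> k_closed E indep j (\<Inter>C)"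
  unfolding k_closed_def by blast

lemma cl_closed: "k_closed E indep j (cl_k E indep j U)"
  unfolding cl_k_def by (rule k_closed_Inter) blast

lemma L1:
  assumes VU: "V \<subseteq> U" and ex: "\<forall>x\<in>U - V. \<exists>Y\<subseteq>V. int (card Y) \<le> j \<and> x \<in> mcl E indep Y"
  shows "cl_k E indep j V = cl_k E indep j U"
proof -
  have key: "U \<subseteq> Z" if h: "V \<subseteq> Z" "k_closed E indep j Z" for Z
  proof
    fix x assume xU: "x \<in> U"
    show "x \<in> Z"
    proof (cases "x \<in> V")
      case True thus ?thesis using h by blast
    next
      case False
      hence "x \<in> U - V" using xU by simp
      then obtain Y where Y: "Y \<subseteq> V" "int (card Y) \<le> j" "x \<in> mcl E indep Y" using ex by blast
      have "Y \<subseteq> Z" using Y(1) h(1) by (rule order_trans)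
      hence "mcl E indep Y \<subseteq> Z" using h(2) Y(2) unfolding k_closed_def by blast
      thus ?thesis using Y(3) by blast
    qed
  qed
  have "{Z. Z \<subseteq> E \<and> V \<subseteq> Z \<and> k_closed E indep j Z} = {Z. Z \<subseteq> E \<and> U \<subseteq> Z \<and> k_closed E indep j Z}"
  proof (rule set_eqI)
    fix Z
    show "Z \<in> {Z. Z \<subseteq> E \<and> V \<subseteq> Z \<and> k_closed E indep j Z} \<longleftrightarrow> Z \<in> {Z. Z \<subseteq> E \<and> U \<subseteq> Z \<and> k_closed E indep j Z}"
      using key[of Z] VU by blast
  qed
  thus ?thesis unfolding cl_k_def by simp
qed

section \<open>U* properties\<close>

lemma ustar_prop:
  fixes E :: "'a::linorder set" and indep :: "'a set \<Rightarrow> bool"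
  assumes M: "matroid E indep" and fl: "flat E indep F"
  shows "Ustar E indep F \<subseteq> E \<and> cl_k E indep (int (mrank indep F) - 1) (Ustar E indep F) = F
     \<and> (\<forall>V. V \<subseteq> E \<and> cl_k E indep (int (mrank indep F) - 1) V = F \<longrightarrow> card (Ustar E indep F) \<le> card V)"
proof -
  define j where "j = int (mrank indep F) - 1"
  define fam where "fam = {U. U \<subseteq> E \<and> cl_k E indep j U = F}"
  have fE: "finite E" using m_fin[OF M] .
  have FE: "F \<subseteq> E" using fl unfolding flat_def by blast
  have ffam: "finite fam" unfolding fam_def
    by (rule rev_finite_subset[OF finite_Pow_iff[THEN iffD2, OF fE]]) blast
  have kcF: "k_closed E indep j F" unfolding k_closed_def using flat_closed[OF M fl] by blast
  have "cl_k E indep j F = F"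
    using cl_sup[OF FE, of indep j] cl_least[OF FE subset_refl kcF] by blast
  hence Ffam: "F \<in> fam" unfolding fam_def using FE by blast
  hence ne: "fam \<noteq> {}" by blast
  have allf: "\<forall>X\<in>fam. finite X" unfolding fam_def using finite_subset[OF _ fE] by blast
  have U: "Ustar E indep F = glex_min fam" unfolding Ustar_def fam_def j_def ..
  have P: "glex_min fam \<in> fam \<and> (\<forall>V\<in>fam. V \<noteq> glex_min fam \<longrightarrow> glex_less (glex_min fam) V)"
    by (rule glex_min_prop[OF ffam ne allf])
  have c: "card (glex_min fam) \<le> card V" if "V \<in> fam" for V
  proof (cases "V = glex_min fam")
    case True thus ?thesis by simp
  next
    case False thus ?thesis using P that glex_card by blast
  qed
  show ?thesis unfolding U using P c unfolding fam_def j_def by blast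
qed

theorem lemma5p2:
  fixes E :: "'a::linorder set" and indep :: "'a set \<Rightarrow> bool"
  assumes "matroid E indep"
  shows "\<forall>A\<in>Ustar_all E indep. \<forall>B\<in>Ustar_all E indep. A \<subseteq> B \<longrightarrow> A = B"
proof (intro ballI impI)
  note M = assms
  fix A B assume A: "A \<in> Ustar_all E indep" and B: "B \<in> Ustar_all E indep" and AB: "A \<subseteq> B"
  obtain F k where F: "flat E indep F" "mrank indep F = k" "A = Ustar E indep F" "card A > k"
    using A unfolding Ustar_all_def Ustar_k_def by blast
  obtain G l where G: "flat E indep G" "mrank indep G = l" "B = Ustar E indep G" "card B > l"
    using B unfolding Ustar_all_def Ustar_k_def by blast
  have fE: "finite E" using m_fin[OF M] .
  have PA: "A \<subseteq> E" "cl_k E indep (int k - 1) A = F"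
      "\<And>V. V \<subseteq> E \<Longrightarrow> cl_k E indep (int k - 1) V = F \<Longrightarrow> card A \<le> card V"
    using ustar_prop[OF M F(1)] F(2,3) by auto
  have PB: "B \<subseteq> E" "cl_k E indep (int l - 1) B = G"
      "\<And>V. V \<subseteq> E \<Longrightarrow> cl_k E indep (int l - 1) V = G \<Longrightarrow> card B \<le> card V"
    using ustar_prop[OF M G(1)] G(2,3) by auto
  have FE: "F \<subseteq> E" and GE: "G \<subseteq> E" using F(1) G(1) unfolding flat_def by blast+
  have AF: "A \<subseteq> F" using cl_sup[OF PA(1), of indep "int k - 1"] PA(2) by simp
  have BG: "B \<subseteq> G" using cl_sup[OF PB(1), of indep "int l - 1"] PB(2) by simp
  have fA: "finite A" using finite_subset[OF PA(1) fE] .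
  have fB: "finite B" using finite_subset[OF PB(1) fE] .
  obtain I where I: "I \<subseteq> A" "indep I" "card I = mrank indep A" by (rule R2'[OF M PA(1)])
  have rA: "mrank indep A = k"
  proof -
    have "mrank indep A \<le> k" using R1[OF M AF FE] F(2) by simp
    moreover have "\<not> mrank indep A < k"
    proof
      assume lt: "mrank indep A < k"
      have IE: "I \<subseteq> E" using I(1) PA(1) by (rule order_trans)
      have "\<forall>x\<in>A - I. \<exists>Y\<subseteq>I. int (card Y) \<le> int k - 1 \<and> x \<in> mcl E indep Y"
      proof
        fix x assume "x \<in> A - I"
        hence "x \<in> mcl E indep I" using basis_cl[OF M PA(1) I(1) I(2) I(3)] by blast
        moreover have "int (card I) \<le> int k - 1" using lt I(3) by linarith
        ultimately show "\<exists>Y\<subseteq>I. int (card Y) \<le> int k - 1 \<and> x \<in> mcl E indep Y" by blast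
      qed
      hence "cl_k E indep (int k - 1) I = cl_k E indep (int k - 1) A" by (rule L1[OF I(1)])
      hence "card A \<le> card I" using PA(2) PA(3)[OF IE] by simp
      thus False using lt I(3) F(4) by linarith
    qed
    ultimately show ?thesis by linarith
  qed
  have AG: "A \<subseteq> G" using AB BG by (rule order_trans)
  have "mrank indep A \<le> l" using R1[OF M AG GE] G(2) by simp
  hence kl: "k \<le> l" using rA by simp
  have "\<not> k < l"
  proof
    assume lt: "k < l"
    have "\<not> A \<subseteq> I"
    proof
      assume "A \<subseteq> I"
      hence "card A \<le> card I" using card_mono[OF finite_subset[OF I(1) fA]] by blast
      thus False using I(3) rA F(4) by linarith
    qed
    then obtain x where x: "x \<in> A" "x \<notin> I" by blast
    have xcl: "x \<in> mcl E indep I" using basis_cl[OF M PA(1) I(1) I(2) I(3)] x(1) by blast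
    have IB: "I \<subseteq> B - {x}" using I(1) AB x(2) by blast
    have "\<forall>y\<in>B - (B - {x}). \<exists>Y\<subseteq>B - {x}. int (card Y) \<le> int l - 1 \<and> y \<in> mcl E indep Y"
    proof
      fix y assume "y \<in> B - (B - {x})"
      hence "y = x" by blast
      moreover have "int (card I) \<le> int l - 1" using lt I(3) rA by linarith
      ultimately show "\<exists>Y\<subseteq>B - {x}. int (card Y) \<le> int l - 1 \<and> y \<in> mcl E indep Y"
        using IB xcl by blast
    qed
    hence "cl_k E indep (int l - 1) (B - {x}) = cl_k E indep (int l - 1) B"
      by (rule L1[OF Diff_subset])
    hence "card B \<le> card (B - {x})" using PB(2) PB(3)[of "B - {x}"] PB(1) by blast
    moreover have "x \<in> B" using x(1) AB by blast
    ultimately show False using fB card_Diff1_less[OF fB, of x] by linarith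
  qed
  hence kl': "k = l" using kl by simp
  have kcG: "k_closed E indep (int k - 1) G" using cl_closed[of E indep "int l - 1" B] PB(2) kl' by simp
  have "F \<subseteq> G" using cl_least[OF GE AG kcG] PA(2) by simp
  hence "F = G" using flat_eq[OF M F(1) G(1)] F(2) G(2) kl' by simp
  thus "A = B" using F(3) G(3) by simp
qed

end
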